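(* Let $N_1,N_2,N_3,L_1,L_2,L_3\ge1$ be dyadic, let $A\ge2^{25}$ be dyadic and let $j_1,j_2\in\{0,\dots,A-1\}$ with $|j_1-j_2|\le32$. Let $\lambda_\iota=(\tau_\iota,\xi_\iota,\eta_\iota)\in G_{N_\iota,L_\iota}\cap\tilde{\mathcal D}^A_{j_\iota}$ for $\iota=1,2$, with $\lambda_1+\lambda_2\in G_{N_3,L_3}$, and set $(\xi_3,\eta_3)=-(\xi_1+\xi_2,\eta_1+\eta_2)$. Assume $((\xi_1,\eta_1),(\xi_2,\eta_2))\notin\mathcal I_1$, and assume Case 1.1: $N_1\sim N_2\gg N_3$ and $|\xi_1|\sim|\eta_1|\sim|\xi_2|\sim|\eta_2|\sim N_1\gg|\xi_3|\sim|\eta_3|$. If $\max_{1\le\iota\le3}L_\iota\lesssim A^{-1}N_1^3$, then $N_3\lesssim A^{-1}N_1$.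
   Context: $G_{N,L}=\{(\tau,\xi,\eta):N/2<|(\xi,\eta)|<2N,\ L/2<|\tau-\xi^3-\eta^3|<2L\}$. Angular sectors: for dyadic $A$ and $j\in\{0,\dots,A-1\}$, $\Theta^A_j=[\frac{\pi}{A}(j-2),\frac\pi A(j+2)]\cup[-\pi+\frac\pi A(j-2),-\pi+\frac\pi A(j+2)]$, $\mathcal D^A_j=\{r(\cos\theta,\sin\theta):r\ge0,\ \theta\in\Theta^A_j\}\subset\mathbb{R}^2$, $\tilde{\mathcal D}^A_j=\mathbb{R}\times\mathcal D^A_j$. $\mathcal I_1=\mathcal D^{2^{11}}_{3\cdot2^9}\times\mathcal D^{2^{11}}_{3\cdot 2^9}\subset\mathbb{R}^2\times\mathbb{R}^2$, i.e. both vectors lie within angle $\pi/2^{10}$ of the line $\xi+\eta=0$. $A\lesssim B$ means $A\le CB$ with an absolute constant; $A\gg B$ means $A\ge CB$ for a sufficiently large absolute constant; $\sim$ means comparable with fixed absolute constants. *)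

theory Defs
  imports "HOL-Analysis.Analysis"
begin

definition dyadic :: "real \<Rightarrow> bool" where
  "dyadic x \<longleftrightarrow> (\<exists>k::int. x = 2 powr (real_of_int k))"

definition G :: "real \<Rightarrow> real \<Rightarrow> (real \<times> real \<times> real) set" where
  "G N L = {(\<tau>, \<xi>, \<eta>). N / 2 < sqrt (\<xi>\<^sup>2 + \<eta>\<^sup>2) \<and> sqrt (\<xi>\<^sup>2 + \<eta>\<^sup>2) < 2 * N
              \<and> L / 2 < \<bar>\<tau> - \<xi> ^ 3 - \<eta> ^ 3\<bar> \<and> \<bar>\<tau> - \<xi> ^ 3 - \<eta> ^ 3\<bar> < 2 * L}"

definition Theta :: "real \<Rightarrow> nat \<Rightarrow> real set" where
  "Theta A j = {pi / A * (real j - 2) .. pi / A * (real j + 2)}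
             \<union> {- pi + pi / A * (real j - 2) .. - pi + pi / A * (real j + 2)}"

definition D :: "real \<Rightarrow> nat \<Rightarrow> (real \<times> real) set" where
  "D A j = {(r * cos \<theta>, r * sin \<theta>) | r \<theta>. r \<ge> 0 \<and> \<theta> \<in> Theta A j}"

definition Dt :: "real \<Rightarrow> nat \<Rightarrow> (real \<times> real \<times> real) set" where
  "Dt A j = UNIV \<times> D A j"

definition I1 :: "((real \<times> real) \<times> (real \<times> real)) set" where
  "I1 = D (2 ^ 11) (3 * 2 ^ 9) \<times> D (2 ^ 11) (3 * 2 ^ 9)"

end

theory Submission
  imports Defs
begin



lemma sin_dbl_le: "0 \<le> t \<Longrightarrow> t \<le> pi \<Longrightarrow> sin (2*t) \<le> 2 * sin t"
proof -
  assume a: "0 \<le> t" "t \<le> pi"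
  have "sin t \<ge> 0" using sin_ge_zero a by auto
  then have "sin t * cos t \<le> sin t * 1" by (intro mult_left_mono) auto
  then show ?thesis by (simp add: sin_double)
qed

lemma sin_pow_lower: "sin (pi / 2^(n+1)) \<ge> 1 / 2^n"
proof (induction n)
  case 0 then show ?case by simp
next
  case (Suc n)
  have t: "2 * (pi / 2^(Suc n + 1)) = pi / 2^(n+1)" by simp
  have "0 \<le> pi / 2^(Suc n + 1)" by simp
  moreover have "pi / 2^(Suc n + 1) \<le> pi"
  proof -
    have "(1::real) \<le> 2^n" by simp
    then have "(1::real) \<le> 4 * 2^n" by linarith
    then show ?thesis by (simp add: divide_le_eq)
  qed
  ultimately have "sin (pi / 2^(n+1)) \<le> 2 * sin (pi / 2^(Suc n + 1))"
    using sin_dbl_le t by metis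
  with Suc show ?case by simp
qed

lemma sin_t0: "sin (pi/2048) \<ge> 1/1024"
  using sin_pow_lower[of 10] by simp

lemma cs_lower:
  fixes \<phi> :: real
  assumes "-pi/2^20 \<le> \<phi>" "\<phi> \<le> pi + pi/2^20"
    "\<phi> < 3*pi/4 - pi/2048 \<or> \<phi> > 3*pi/4 + pi/2048"
  shows "\<bar>cos \<phi> + sin \<phi>\<bar> \<ge> 1/1024"
proof -
  define x where "x = \<phi> + pi/4"
  have e: "cos \<phi> + sin \<phi> = sqrt 2 * sin x"
    unfolding x_def by (simp add: sin_add cos_45 sin_45 algebra_simps)
  have s2: "sqrt 2 \<ge> 1" by simp
  have x1: "pi/4 - pi/2^20 \<le> x" "x \<le> 5*pi/4 + pi/2^20" using assms unfolding x_def by auto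
  have x2: "x < pi - pi/2048 \<or> x > pi + pi/2048" using assms(3) unfolding x_def by auto
  have pp: "pi > 0" by simp
  have key: "\<bar>sin x\<bar> \<ge> 1/1024"
  proof -
    consider "x \<le> pi/2" | "pi/2 \<le> x" "x < pi - pi/2048" | "x > pi + pi/2048" using x2 by linarith
    then show ?thesis
    proof cases
      case 1
      have "pi/2048 \<le> x" using x1 pp by (simp add: field_simps)
      then have "sin (pi/2048) \<le> sin x" using 1 pp by (intro sin_monotone_2pi_le) auto
      then show ?thesis using sin_t0 by linarith
    next
      case 2
      have "sin (pi/2048) \<le> sin (pi - x)" using 2 pp by (intro sin_monotone_2pi_le) auto
      then show ?thesis using sin_t0 by simp
    next
      case 3
      have "sin (pi/2048) \<le> sin (x - pi)" using 3 x1 pp by (intro sin_monotone_2pi_le) auto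
      then show ?thesis using sin_t0 by simp
    qed
  qed
  have "\<bar>sin x\<bar> \<le> sqrt 2 * \<bar>sin x\<bar>" using s2 by (simp add: mult_le_cancel_right1)
  then show ?thesis using key e by (simp add: abs_mult)
qed



lemma D_param:
  assumes "(x,y) \<in> D A j"
  shows "\<exists>s \<phi>. x = s * cos \<phi> \<and> y = s * sin \<phi> \<and> pi/A*(real j - 2) \<le> \<phi> \<and> \<phi> \<le> pi/A*(real j + 2)"
proof -
  obtain r \<theta> where r: "x = r * cos \<theta>" "y = r * sin \<theta>" "\<theta> \<in> Theta A j"
    using assms unfolding D_def by auto
  show ?thesis
  proof (cases "\<theta> \<in> {pi / A * (real j - 2) .. pi / A * (real j + 2)}")
    case True then show ?thesis using r by auto
  next
    case False
    then have "\<theta> + pi \<in> {pi / A * (real j - 2) .. pi / A * (real j + 2)}"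
      using r(3) unfolding Theta_def by auto
    moreover have "x = (-r) * cos (\<theta> + pi)" "y = (-r) * sin (\<theta> + pi)" using r by auto
    ultimately show ?thesis by (intro exI[of _ "-r"] exI[of _ "\<theta>+pi"]) auto
  qed
qed

lemma D_mem:
  assumes "pi/A*(real j - 2) \<le> \<phi>" "\<phi> \<le> pi/A*(real j + 2)"
  shows "(s * cos \<phi>, s * sin \<phi>) \<in> D A j"
proof (cases "s \<ge> 0")
  case True
  then show ?thesis using assms unfolding D_def Theta_def
    by (intro CollectI exI[of _ s] exI[of _ \<phi>]) auto
next
  case False
  have "\<phi> - pi \<in> Theta A j" using assms unfolding Theta_def by auto
  moreover have "s * cos \<phi> = (-s) * cos (\<phi> - pi)" "s * sin \<phi> = (-s) * sin (\<phi> - pi)" by auto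
  ultimately show ?thesis using False unfolding D_def
    by (intro CollectI exI[of _ "-s"] exI[of _ "\<phi> - pi"]) auto
qed

lemma angle_facts:
  fixes A \<phi>1 \<phi>2 :: real
  assumes A: "A \<ge> 2^25" and j: "real j1 < A" "\<bar>int j1 - int j2\<bar> \<le> 32"
    and p1: "pi/A*(real j1 - 2) \<le> \<phi>1" "\<phi>1 \<le> pi/A*(real j1 + 2)"
    and p2: "pi/A*(real j2 - 2) \<le> \<phi>2" "\<phi>2 \<le> pi/A*(real j2 + 2)"
  shows "\<bar>\<phi>2 - \<phi>1\<bar> \<le> 36*pi/A" "-pi/2^20 \<le> \<phi>1" "\<phi>1 \<le> pi + pi/2^20" "36*pi/A \<le> pi/2048"
proof -
  have Ap: "A > 0" using A by simp
  have pa: "pi/A \<ge> 0" using Ap by simp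
  have d: "\<bar>real j2 - real j1\<bar> \<le> 32"
  proof -
    have "real j2 - real j1 = real_of_int (int j2 - int j1)" by simp
    moreover have "\<bar>int j2 - int j1\<bar> \<le> 32" using j(2) by linarith
    ultimately show ?thesis by (metis of_int_abs of_int_le_iff of_int_numeral)
  qed
  have "pi/A * (real j2 - real j1 + 4) = pi/A*(real j2+2) - pi/A*(real j1 - 2)" by (simp add: algebra_simps)
  then have "\<phi>2 - \<phi>1 \<le> pi/A * (real j2 - real j1 + 4)" using p1 p2 by linarith
  also have "\<dots> \<le> pi/A * 36" using d pa by (intro mult_left_mono) auto
  finally have a1: "\<phi>2 - \<phi>1 \<le> 36*pi/A" by (simp add: mult.commute)
  have "pi/A * (real j1 - real j2 + 4) = pi/A*(real j1+2) - pi/A*(real j2 - 2)" by (simp add: algebra_simps)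
  then have "\<phi>1 - \<phi>2 \<le> pi/A * (real j1 - real j2 + 4)" using p1 p2 by linarith
  also have "\<dots> \<le> pi/A * 36" using d pa by (intro mult_left_mono) auto
  finally have a2: "\<phi>1 - \<phi>2 \<le> 36*pi/A" by (simp add: mult.commute)
  show "\<bar>\<phi>2 - \<phi>1\<bar> \<le> 36*pi/A" using a1 a2 by linarith
  have "pi/A*(real j1 - 2) \<ge> pi/A * (-2)" using pa by (intro mult_left_mono) auto
  moreover have "pi/A * 2 \<le> pi/2^20" using A Ap by (simp add: field_simps)
  ultimately show "-pi/2^20 \<le> \<phi>1" using p1 by linarith
  have "pi/A*(real j1 + 2) \<le> pi/A * (A + 2)" using pa j by (intro mult_left_mono) auto
  also have "\<dots> = pi + pi/A*2" using Ap by (simp add: field_simps)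
  finally show "\<phi>1 \<le> pi + pi/2^20" using p1 \<open>pi/A * 2 \<le> pi/2^20\<close> by linarith
  show "36*pi/A \<le> pi/2048" using A Ap by (simp add: field_simps)
qed



lemma core:
  fixes c K N1 N2 N3 A s1 s2 \<phi>1 \<phi>2 \<xi>1 \<eta>1 \<xi>2 \<eta>2 :: real
  assumes c: "c \<ge> 1" and K: "K > 0" and N1: "N1 \<ge> 1" and A: "A \<ge> 2^25" and N3: "N3 > 0"
    and R1l: "N1/2 < sqrt (\<xi>1^2+\<eta>1^2)" and R1u: "sqrt (\<xi>1^2+\<eta>1^2) < 2*N1"
    and R2u: "sqrt (\<xi>2^2+\<eta>2^2) < 2*N2"
    and Wl: "N3/2 < sqrt ((\<xi>1+\<xi>2)^2+(\<eta>1+\<eta>2)^2)"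
    and Wu: "sqrt ((\<xi>1+\<xi>2)^2+(\<eta>1+\<eta>2)^2) < 2*N3"
    and x1: "\<xi>1 = s1*cos \<phi>1" "\<eta>1 = s1* sin \<phi>1" "\<xi>2 = s2*cos \<phi>2" "\<eta>2 = s2* sin \<phi>2"
    and dl: "\<bar>\<phi>2-\<phi>1\<bar> \<le> 36*pi/A"
    and F0: "\<bar>cos \<phi>1 + sin \<phi>1\<bar> \<ge> 1/1024"
    and H: "\<bar>\<xi>1*\<xi>2*(\<xi>1+\<xi>2) + \<eta>1*\<eta>2*(\<eta>1+\<eta>2)\<bar> \<le> 2*K*N1^3/A"
    and N23: "262144*c*N3 \<le> N2" "N2 \<le> c*N1"
  shows "N3 \<le> 32768*(2*K+288*c)*N1/A"
proof -
  have Ap: "A > 0" using A by simp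
  define co si where "co = cos \<phi>1" and "si = sin \<phi>1"
  have cs: "co^2 + si^2 = 1" unfolding co_def si_def by simp
  define \<delta> where "\<delta> = \<phi>2 - \<phi>1"
  define a b where "a = s1 + s2 * cos \<delta>" and "b = s2 * sin \<delta>"
  have c2: "cos \<phi>2 = co*cos \<delta> - si* sin \<delta>" "sin \<phi>2 = si*cos \<delta> + co* sin \<delta>"
    using cos_add[of \<phi>1 \<delta>] sin_add[of \<phi>1 \<delta>] unfolding \<delta>_def co_def si_def
    by (simp_all add: algebra_simps)
  define w1 w2 where "w1 = \<xi>1+\<xi>2" and "w2 = \<eta>1+\<eta>2"
  have w1e: "w1 = a*co - b* si"
    unfolding w1_def x1 c2 a_def b_def co_def[symmetric] using cs
    by (simp add: algebra_simps power2_eq_square)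
  have w2e: "w2 = a* si + b*co"
    unfolding w2_def x1 c2 a_def b_def si_def[symmetric] by (simp add: algebra_simps)
  have Wsq: "w1^2 + w2^2 = a^2 + b^2"
  proof -
    have "w1^2 + w2^2 = (a^2+b^2)*(co^2+si^2)" unfolding w1e w2e by (simp add: algebra_simps power2_eq_square)
    then show ?thesis using cs by simp
  qed
  have s1sq: "\<xi>1^2+\<eta>1^2 = s1^2"
  proof -
    have "\<xi>1^2+\<eta>1^2 = s1^2*(co^2+si^2)" unfolding x1 co_def si_def by (simp only: power_mult_distrib distrib_left)
    then show ?thesis using cs by simp
  qed
  have s2sq: "\<xi>2^2+\<eta>2^2 = s2^2"
  proof -
    have "\<xi>2^2+\<eta>2^2 = s2^2*((cos \<phi>2)^2+(sin \<phi>2)^2)" unfolding x1 by (simp only: power_mult_distrib distrib_left)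
    then show ?thesis by simp
  qed
  have as1: "N1/2 < \<bar>s1\<bar>" "\<bar>s1\<bar> < 2*N1" using R1l R1u s1sq by auto
  have as2: "\<bar>s2\<bar> < 2*c*N1" using R2u s2sq N23 by auto
  have s1l: "s1^2 \<ge> N1^2/4"
  proof -
    have "(N1/2)^2 \<le> \<bar>s1\<bar>^2" using as1 N1 by (intro power_mono) auto
    then show ?thesis by (simp add: power_divide)
  qed
  define B where "B = 288*c*N1/A"
  have bB: "\<bar>b\<bar> \<le> B"
  proof -
    have "\<bar>sin \<delta>\<bar> \<le> 36*pi/A" using abs_sin_x_le_abs_x[of \<delta>] dl unfolding \<delta>_def by linarith
    then have "\<bar>b\<bar> \<le> (2*c*N1)*(36*pi/A)" unfolding b_def abs_mult using as2 c N1
      by (intro mult_mono) auto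
    also have "\<dots> \<le> (2*c*N1)*(36*4/A)" using c N1 Ap pi_less_4
      by (intro mult_left_mono) (auto simp: field_simps)
    finally show ?thesis unfolding B_def by simp
  qed
  have Wdef: "sqrt (w1^2+w2^2) = sqrt ((\<xi>1+\<xi>2)^2+(\<eta>1+\<eta>2)^2)" unfolding w1_def w2_def by simp
  have Wab: "sqrt (w1^2+w2^2) \<le> \<bar>a\<bar> + \<bar>b\<bar>"
  proof -
    have "a^2+b^2 \<le> (\<bar>a\<bar> + \<bar>b\<bar>)^2" by (simp add: power2_eq_square algebra_simps)
    then have "sqrt (a^2+b^2) \<le> sqrt ((\<bar>a\<bar> + \<bar>b\<bar>)^2)" by (rule real_sqrt_le_mono)
    then show ?thesis using Wsq by simp
  qed
  have al: "\<bar>a\<bar> \<ge> N3/2 - B" using Wab Wdef Wl bB by linarith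
  define F E where "F = co^3 + si^3" and "E = co* si*(si - co)"
  have csh: "\<bar>co* si\<bar> \<le> 1/2"
  proof -
    have "0 \<le> (\<bar>co\<bar> - \<bar>si\<bar>)^2" by simp
    then have "2*\<bar>co\<bar>*\<bar>si\<bar> \<le> co^2+si^2" by (simp add: power2_eq_square algebra_simps)
    then show ?thesis using cs by (simp add: abs_mult)
  qed
  have Fl: "\<bar>F\<bar> \<ge> 1/2048"
  proof -
    have "F = (co+si)*((co^2+si^2) - co* si)" unfolding F_def by (simp add: algebra_simps power2_eq_square power3_eq_cube)
    then have "F = (co+si)*(1 - co* si)" using cs by simp
    moreover have "\<bar>1 - co* si\<bar> \<ge> 1/2" using csh by linarith
    moreover have "\<bar>co+si\<bar> \<ge> 1/1024" using F0 unfolding co_def si_def .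
    ultimately have "\<bar>co+si\<bar>*\<bar>1 - co* si\<bar> \<ge> (1/1024)*(1/2)" by (intro mult_mono) auto
    then have "\<bar>F\<bar> \<ge> (1/1024)*(1/2)" using \<open>F = (co+si)*(1 - co* si)\<close> by (simp add: abs_mult)
    then show ?thesis by simp
  qed
  have El: "\<bar>E\<bar> \<le> 1"
  proof -
    have "\<bar>si - co\<bar> \<le> 2" unfolding si_def co_def
      using abs_sin_le_one[of \<phi>1] abs_cos_le_one[of \<phi>1] by linarith
    then have "\<bar>E\<bar> \<le> (1/2)*2" unfolding E_def abs_mult[of "co* si"] using csh
      by (intro mult_mono) auto
    then show ?thesis by simp
  qed
  define P Q where "P = \<xi>1*w1^2 + \<eta>1*w2^2" and "Q = \<xi>1^2*w1 + \<eta>1^2*w2"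
  have Qe: "Q = s1^2*(a*F + b*E)"
    unfolding Q_def w1e w2e F_def E_def x1(1,2) co_def[symmetric] si_def[symmetric]
    by (simp add: algebra_simps power2_eq_square power3_eq_cube)
  have HPQ: "\<xi>1*\<xi>2*(\<xi>1+\<xi>2) + \<eta>1*\<eta>2*(\<eta>1+\<eta>2) = P - Q"
    unfolding P_def Q_def w1_def w2_def by (simp add: algebra_simps power2_eq_square)
  have W2: "w1^2 + w2^2 < 4*N3^2"
  proof -
    have "sqrt (w1^2+w2^2) < 2*N3" using Wu Wdef by simp
    then have "(sqrt (w1^2+w2^2))^2 < (2*N3)^2" by (intro power_strict_mono) auto
    then show ?thesis by (simp add: power_mult_distrib)
  qed
  have Pb: "\<bar>P\<bar> \<le> 8*N1*N3^2"
  proof -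
    have x1b: "\<bar>\<xi>1\<bar> \<le> 2*N1" "\<bar>\<eta>1\<bar> \<le> 2*N1"
    proof -
      have "\<bar>\<xi>1\<bar> \<le> \<bar>s1\<bar>*1" unfolding x1 abs_mult by (intro mult_left_mono) auto
      then show "\<bar>\<xi>1\<bar> \<le> 2*N1" using as1 by linarith
      have "\<bar>\<eta>1\<bar> \<le> \<bar>s1\<bar>*1" unfolding x1 abs_mult by (intro mult_left_mono) auto
      then show "\<bar>\<eta>1\<bar> \<le> 2*N1" using as1 by linarith
    qed
    have "\<bar>P\<bar> \<le> \<bar>\<xi>1\<bar>*w1^2 + \<bar>\<eta>1\<bar>*w2^2" unfolding P_def
      using abs_triangle_ineq[of "\<xi>1*w1^2" "\<eta>1*w2^2"] by (simp add: abs_mult)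
    also have "\<dots> \<le> (2*N1)*w1^2 + (2*N1)*w2^2" using x1b
      by (intro add_mono mult_right_mono) auto
    also have "\<dots> = (2*N1)*(w1^2+w2^2)" by (simp add: algebra_simps)
    also have "\<dots> \<le> (2*N1)*(4*N3^2)" using W2 N1 by (intro mult_left_mono) auto
    finally show ?thesis by simp
  qed
  have Qu: "\<bar>Q\<bar> \<le> 8*N1*N3^2 + 2*K*N1^3/A" using H HPQ Pb by linarith
  define X where "X = (N3/2 - B)/2048 - B"
  have aFb: "\<bar>a*F + b*E\<bar> \<ge> X"
  proof -
    have "\<bar>a\<bar>*(1/2048) \<le> \<bar>a\<bar>*\<bar>F\<bar>" using Fl by (intro mult_left_mono) auto
    moreover have "\<bar>b\<bar>*\<bar>E\<bar> \<le> B*1" using bB El by (intro mult_mono) auto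
    moreover have "\<bar>a*F + b*E\<bar> \<ge> \<bar>a\<bar>*\<bar>F\<bar> - \<bar>b\<bar>*\<bar>E\<bar>"
      using abs_triangle_ineq[of "a*F+b*E" "-(b*E)"] by (simp add: abs_mult)
    moreover have "(N3/2 - B)/2048 \<le> \<bar>a\<bar>*(1/2048)" using al by simp
    ultimately show ?thesis unfolding X_def by linarith
  qed
  have QX: "N1^2/4 * X \<le> \<bar>Q\<bar>"
  proof (cases "X \<ge> 0")
    case True
    have "N1^2/4 * X \<le> s1^2 * \<bar>a*F + b*E\<bar>" using s1l aFb True by (intro mult_mono) auto
    then show ?thesis unfolding Qe abs_mult by simp
  next
    case False
    then have "N1^2/4 * X \<le> 0" by (simp add: mult_nonneg_nonpos)
    then show ?thesis by linarith
  qed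
  have N31: "262144*N3 \<le> N1"
  proof -
    have "c*(262144*N3) \<le> c*N1" using N23 by (simp add: algebra_simps)
    then show ?thesis using c by (simp add: mult_le_cancel_left_pos)
  qed
  have N3sq: "8*N1*N3^2 \<le> N1^2*N3/32768"
  proof -
    have "8*N1*N3^2 = (8*N1*N3)*N3" by (simp add: power2_eq_square)
    also have "\<dots> \<le> (8*N1*N3)*(N1/262144)" using N31 N1 N3 by (intro mult_left_mono) auto
    also have "\<dots> = N1^2*N3/32768" by (simp add: power2_eq_square)
    finally show ?thesis .
  qed
  have fin: "N1^2 * (N3/32768) \<le> N1^2 * (2*K*N1/A + B)"
  proof -
    define p q t where "p = N1^2*N3" and "q = N1^2*B" and "t = N1^2*(2*K*N1/A)"
    have f1: "N1^2/4 * X \<le> N1^2*N3/32768 + 2*K*N1^3/A" using QX Qu N3sq by linarith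
    have f2: "N1^2/4 * X = p/16384 - q*(2049/8192)" unfolding X_def p_def q_def by (simp add: field_simps)
    have f3: "2*K*N1^3/A = t" unfolding t_def by (simp add: power2_eq_square power3_eq_cube)
    have f4: "N1^2*N3/32768 = p/32768" unfolding p_def by simp
    have f5: "q \<ge> 0" using N1 c Ap unfolding q_def B_def by simp
    have f6: "N1^2 * (N3/32768) = p/32768" unfolding p_def by simp
    have f7: "N1^2 * (2*K*N1/A + B) = t + q" unfolding t_def q_def by (simp add: algebra_simps)
    show ?thesis unfolding f6 f7 using f1 f2 f3 f4 f5 by linarith
  qed
  have "N3/32768 \<le> 2*K*N1/A + B" using fin N1 by (simp add: mult_le_cancel_left_pos)
  then show ?thesis unfolding B_def using Ap by (simp add: field_simps)
qed



lemma main_step: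
  fixes c K N1 N2 N3 L1 L2 L3 A \<tau>1 \<xi>1 \<eta>1 \<tau>2 \<xi>2 \<eta>2 :: real and j1 j2 :: nat
  assumes g1: "(\<tau>1, \<xi>1, \<eta>1) \<in> G N1 L1 \<inter> Dt A j1"
    and g2: "(\<tau>2, \<xi>2, \<eta>2) \<in> G N2 L2 \<inter> Dt A j2"
    and g3: "(\<tau>1 + \<tau>2, \<xi>1 + \<xi>2, \<eta>1 + \<eta>2) \<in> G N3 L3"
    and c: "c \<ge> 1" and K: "K > 0" and N1: "N1 \<ge> 1" and N3: "N3 \<ge> 1" and A: "A \<ge> 2^25"
    and j: "real j1 < A" "real j2 < A" "\<bar>int j1 - int j2\<bar> \<le> 32"
    and nI: "((\<xi>1, \<eta>1), (\<xi>2, \<eta>2)) \<notin> I1"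
    and N21: "N2 \<le> c * N1" and N32: "262144 * c * N3 \<le> N2"
    and LM: "Max {L1, L2, L3} \<le> K * N1 ^ 3 / A"
  shows "N3 \<le> 32768*(2*K+288*c)*N1/A"
proof -
  have G1: "N1 / 2 < sqrt (\<xi>1\<^sup>2 + \<eta>1\<^sup>2)" "sqrt (\<xi>1\<^sup>2 + \<eta>1\<^sup>2) < 2 * N1"
     "\<bar>\<tau>1 - \<xi>1 ^ 3 - \<eta>1 ^ 3\<bar> < 2 * L1" using g1 unfolding G_def by auto
  have G2: "sqrt (\<xi>2\<^sup>2 + \<eta>2\<^sup>2) < 2 * N2"
     "\<bar>\<tau>2 - \<xi>2 ^ 3 - \<eta>2 ^ 3\<bar> < 2 * L2" using g2 unfolding G_def by auto
  have G3: "N3 / 2 < sqrt ((\<xi>1+\<xi>2)\<^sup>2 + (\<eta>1+\<eta>2)\<^sup>2)" "sqrt ((\<xi>1+\<xi>2)\<^sup>2 + (\<eta>1+\<eta>2)\<^sup>2) < 2 * N3"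
     "\<bar>(\<tau>1+\<tau>2) - (\<xi>1+\<xi>2) ^ 3 - (\<eta>1+\<eta>2) ^ 3\<bar> < 2 * L3" using g3 unfolding G_def by auto
  have d1: "(\<xi>1, \<eta>1) \<in> D A j1" using g1 unfolding Dt_def by auto
  have d2: "(\<xi>2, \<eta>2) \<in> D A j2" using g2 unfolding Dt_def by auto
  obtain s1 \<phi>1 where p1: "\<xi>1 = s1 * cos \<phi>1" "\<eta>1 = s1 * sin \<phi>1"
     "pi/A*(real j1 - 2) \<le> \<phi>1" "\<phi>1 \<le> pi/A*(real j1 + 2)" using D_param[OF d1] by blast
  obtain s2 \<phi>2 where p2: "\<xi>2 = s2 * cos \<phi>2" "\<eta>2 = s2 * sin \<phi>2"
     "pi/A*(real j2 - 2) \<le> \<phi>2" "\<phi>2 \<le> pi/A*(real j2 + 2)" using D_param[OF d2] by blast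
  note af = angle_facts[OF A j(1) j(3) p1(3,4) p2(3,4)]
  have far: "\<phi>1 < 3*pi/4 - pi/2048 \<or> \<phi>1 > 3*pi/4 + pi/2048"
  proof (rule ccontr)
    assume "\<not> ?thesis"
    then have n: "3*pi/4 - pi/2048 \<le> \<phi>1" "\<phi>1 \<le> 3*pi/4 + pi/2048" by auto
    have e1: "pi/(2^11)*(real (3*2^9::nat) - 2) = 3*pi/4 - 2*pi/2048" by simp
    have e2: "pi/(2^11)*(real (3*2^9::nat) + 2) = 3*pi/4 + 2*pi/2048" by simp
    have "(\<xi>1, \<eta>1) \<in> D (2^11) (3*2^9)" unfolding p1(1,2)
      by (rule D_mem) (use n e1 e2 in auto)
    moreover have "(\<xi>2, \<eta>2) \<in> D (2^11) (3*2^9)" unfolding p2(1,2)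
      by (rule D_mem) (use n e1 e2 af(1) af(4) in auto)
    ultimately show False using nI unfolding I1_def by auto
  qed
  have F0: "\<bar>cos \<phi>1 + sin \<phi>1\<bar> \<ge> 1/1024" using cs_lower af(2,3) far by blast
  define h where "h = \<xi>1*\<xi>2*(\<xi>1+\<xi>2) + \<eta>1*\<eta>2*(\<eta>1+\<eta>2)"
  have hid: "((\<tau>1+\<tau>2) - (\<xi>1+\<xi>2) ^ 3 - (\<eta>1+\<eta>2) ^ 3) - (\<tau>1 - \<xi>1 ^ 3 - \<eta>1 ^ 3) - (\<tau>2 - \<xi>2 ^ 3 - \<eta>2 ^ 3) = -3*h"
    unfolding h_def by (simp add: algebra_simps power3_eq_cube)
  have Ls: "L1 \<le> Max {L1, L2, L3}" "L2 \<le> Max {L1, L2, L3}" "L3 \<le> Max {L1, L2, L3}" by auto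
  have "3*\<bar>h\<bar> < 2*L1 + 2*L2 + 2*L3"
  proof -
    have "\<bar>-3*h\<bar> \<le> \<bar>(\<tau>1+\<tau>2) - (\<xi>1+\<xi>2) ^ 3 - (\<eta>1+\<eta>2) ^ 3\<bar> + \<bar>\<tau>1 - \<xi>1 ^ 3 - \<eta>1 ^ 3\<bar> + \<bar>\<tau>2 - \<xi>2 ^ 3 - \<eta>2 ^ 3\<bar>"
      unfolding hid[symmetric] by linarith
    then show ?thesis using G1(3) G2(2) G3(3) by (simp add: abs_mult)
  qed
  moreover have "2*K*N1^3/A = 2*(K*N1^3/A)" by simp
  ultimately have H: "\<bar>h\<bar> \<le> 2*K*N1^3/A" using Ls LM by linarith
  show ?thesis
    by (rule core[OF c K N1 A _ G1(1,2) G2(1) G3(1,2) p1(1,2) p2(1,2) af(1) F0 H[unfolded h_def] N32 N21])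
      (use N3 in simp)
qed


theorem lemma6p1:
  "\<forall>c::real. c \<ge> 1 \<longrightarrow>
   (\<exists>C0::real. C0 > 0 \<and>
   (\<forall>K::real. K > 0 \<longrightarrow>
   (\<exists>C::real. C > 0 \<and>
   (\<forall>(N1::real) (N2::real) (N3::real) (L1::real) (L2::real) (L3::real) (A::real)
      (j1::nat) (j2::nat) (\<tau>1::real) (\<xi>1::real) (\<eta>1::real) (\<tau>2::real) (\<xi>2::real) (\<eta>2::real).
     dyadic N1 \<and> dyadic N2 \<and> dyadic N3 \<and> dyadic L1 \<and> dyadic L2 \<and> dyadic L3 \<and>
     N1 \<ge> 1 \<and> N2 \<ge> 1 \<and> N3 \<ge> 1 \<and> L1 \<ge> 1 \<and> L2 \<ge> 1 \<and> L3 \<ge> 1 \<and>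
     dyadic A \<and> A \<ge> 2 ^ 25 \<and>
     real j1 < A \<and> real j2 < A \<and> \<bar>int j1 - int j2\<bar> \<le> 32 \<and>
     (\<tau>1, \<xi>1, \<eta>1) \<in> G N1 L1 \<inter> Dt A j1 \<and>
     (\<tau>2, \<xi>2, \<eta>2) \<in> G N2 L2 \<inter> Dt A j2 \<and>
     (\<tau>1 + \<tau>2, \<xi>1 + \<xi>2, \<eta>1 + \<eta>2) \<in> G N3 L3 \<and>
     ((\<xi>1, \<eta>1), (\<xi>2, \<eta>2)) \<notin> I1 \<and>
     \<comment> \<open>Case 1.1: N1 ~ N2 >> N3\<close>
     N1 \<le> c * N2 \<and> N2 \<le> c * N1 \<and> C0 * N3 \<le> N2 \<and>
     \<comment> \<open>|xi1| ~ |eta1| ~ |xi2| ~ |eta2| ~ N1 >> |xi3| ~ |eta3|, with (xi3,eta3) = -(xi1+xi2, eta1+eta2)\<close>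
     \<bar>\<xi>1\<bar> \<le> c * \<bar>\<eta>1\<bar> \<and> \<bar>\<eta>1\<bar> \<le> c * \<bar>\<xi>1\<bar> \<and>
     \<bar>\<eta>1\<bar> \<le> c * \<bar>\<xi>2\<bar> \<and> \<bar>\<xi>2\<bar> \<le> c * \<bar>\<eta>1\<bar> \<and>
     \<bar>\<xi>2\<bar> \<le> c * \<bar>\<eta>2\<bar> \<and> \<bar>\<eta>2\<bar> \<le> c * \<bar>\<xi>2\<bar> \<and>
     \<bar>\<eta>2\<bar> \<le> c * N1 \<and> N1 \<le> c * \<bar>\<eta>2\<bar> \<and>
     C0 * \<bar>-(\<xi>1 + \<xi>2)\<bar> \<le> N1 \<and>
     \<bar>-(\<xi>1 + \<xi>2)\<bar> \<le> c * \<bar>-(\<eta>1 + \<eta>2)\<bar> \<and> \<bar>-(\<eta>1 + \<eta>2)\<bar> \<le> c * \<bar>-(\<xi>1 + \<xi>2)\<bar> \<and>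
     \<comment> \<open>max L \<lesssim> A^{-1} N1^3\<close>
     Max {L1, L2, L3} \<le> K * N1 ^ 3 / A
     \<longrightarrow> N3 \<le> C * N1 / A))))"
  apply (intro allI impI)
  subgoal for c
    apply (rule exI[where x="262144*c"])
    apply (intro conjI allI impI)
     apply simp
    subgoal for K
      apply (rule exI[where x="32768*(2*K+288*c)"])
      apply (intro conjI allI impI)
       apply simp
      apply (elim conjE)
      by (rule main_step[where c=c and K=K], assumption+)
    done
  done

end
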